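(* Let $n,a,t\in\mathbb N$ with $t<a<n$. Let $\mathcal F\subseteq\binom{[n]}{a}$ be an ideal of the partial order $\preceq_a$ and let $\mathcal G\subseteq\binom{[n]}{a}$. Then the following are equivalent: (a) $|F\cap G|\le t$ for all $F\in\mathcal F$, $G\in\mathcal G$; (b) $L_{t+1}(G)\not\preceq_{t+1}R_{t+1}(F)$ for all $F\in\mathcal F$ and $G\in\mathcal G$.
   Context: $[n]=\{1,\dots,n\}$, $\binom{[n]}{l}$ is the family of $l$-element subsets of $[n]$. For $X\subseteq[n]$ and $1\le i\le|X|$, $m(X,i)$ is the $i$-th smallest element of $X$. For $l\in[n]$, the partial order $\preceq_l$ on $\binom{[n]}{l}$ is defined by $X\preceq_l Y$ iff $m(X,i)\le m(Y,i)$ for all $1\le i\le l$. An ideal of a poset is a downward-closed subset. For $X\in\binom{[n]}{a}$ and $j\le a$, $L_j(X)=\{m(X,i):1\le i\le j\}$ (the $j$ smallest elements of $X$) and $R_j(X)=\{m(X,i):a-j+1\le i\le a\}$ (the $j$ largest elements of $X$). *)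

theory Defs
  imports Main
begin

definition ksubsets :: "nat \<Rightarrow> nat \<Rightarrow> nat set set" where
  "ksubsets n l = {X. X \<subseteq> {1..n} \<and> card X = l}"

text \<open>m(X,i): the i-th smallest element of X (1-indexed, 1 <= i <= card X).\<close>
definition mth :: "nat set \<Rightarrow> nat \<Rightarrow> nat" where
  "mth X i = sorted_list_of_set X ! (i - 1)"

definition shift_le :: "nat \<Rightarrow> nat set \<Rightarrow> nat set \<Rightarrow> bool" where
  "shift_le l X Y \<longleftrightarrow> (\<forall>i\<in>{1..l}. mth X i \<le> mth Y i)"

definition shift_ideal :: "nat \<Rightarrow> nat \<Rightarrow> nat set set \<Rightarrow> bool" where
  "shift_ideal n l F \<longleftrightarrow> F \<subseteq> ksubsets n l \<and>
     (\<forall>Y\<in>F. \<forall>X\<in>ksubsets n l. shift_le l X Y \<longrightarrow> X \<in> F)"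

definition Lj :: "nat \<Rightarrow> nat set \<Rightarrow> nat set" where
  "Lj j X = {mth X i | i. 1 \<le> i \<and> i \<le> j}"

definition Rj :: "nat \<Rightarrow> nat set \<Rightarrow> nat set" where
  "Rj j X = {mth X i | i. card X - j + 1 \<le> i \<and> i \<le> card X}"

end

theory Submission
  imports Defs
begin

definition cnt :: "nat set \<Rightarrow> nat \<Rightarrow> nat" where
  "cnt X x = card {y\<in>X. y \<le> x}"

lemma cnt_mono: "finite X \<Longrightarrow> x \<le> x' \<Longrightarrow> cnt X x \<le> cnt X x'"
  unfolding cnt_def by (rule card_mono) auto

lemma mth_props:
  assumes "finite X" "1 \<le> i" "i \<le> card X"
  shows "mth X i \<in> X" "cnt X (mth X i) = i"
proof -
  define xs where "xs = sorted_list_of_set X"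
  define k where "k = i - 1"
  have len: "length xs = card X" unfolding xs_def by simp
  have k: "k < length xs" using assms len unfolding k_def by simp
  have m: "mth X i = xs ! k" unfolding mth_def xs_def k_def by simp
  have setx: "set xs = X" unfolding xs_def using assms by simp
  have ss: "sorted_wrt (<) xs" unfolding xs_def by (rule strict_sorted_list_of_set)
  have so: "sorted xs" "distinct xs" unfolding xs_def by auto
  show "mth X i \<in> X" using m k setx by auto
  have eq: "{y\<in>X. y \<le> xs ! k} = (!) xs ` {..k}"
  proof
    show "(!) xs ` {..k} \<subseteq> {y\<in>X. y \<le> xs ! k}"
      using so(1) k setx by (auto intro: sorted_nth_mono)
    show "{y\<in>X. y \<le> xs ! k} \<subseteq> (!) xs ` {..k}"
    proof
      fix y assume y: "y \<in> {y\<in>X. y \<le> xs ! k}"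
      then obtain m where mm: "m < length xs" "y = xs ! m" using setx by (auto simp: in_set_conv_nth)
      have "m \<le> k"
      proof (rule ccontr)
        assume "\<not> m \<le> k"
        then have "xs ! k < xs ! m" using ss mm k by (simp add: sorted_wrt_iff_nth_less)
        then show False using y mm by simp
      qed
      then show "y \<in> (!) xs ` {..k}" using mm by auto
    qed
  qed
  have "inj_on ((!) xs) {..k}" using so(2) k by (auto simp: inj_on_def nth_eq_iff_index_eq)
  then have "card ((!) xs ` {..k}) = Suc k" by (simp add: card_image)
  then show "cnt X (mth X i) = i" using eq m assms unfolding cnt_def k_def by simp
qed

lemma mth_le_iff:
  assumes "finite X" "1 \<le> i" "i \<le> card X"
  shows "mth X i \<le> x \<longleftrightarrow> i \<le> cnt X x"
proof
  assume "mth X i \<le> x"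
  then show "i \<le> cnt X x" using cnt_mono[OF assms(1)] mth_props[OF assms] by metis
next
  assume h: "i \<le> cnt X x"
  show "mth X i \<le> x"
  proof (rule ccontr)
    assume "\<not> mth X i \<le> x"
    then have "{y\<in>X. y \<le> x} \<subset> {y\<in>X. y \<le> mth X i}" using mth_props[OF assms] by auto
    then have "cnt X x < cnt X (mth X i)" unfolding cnt_def using assms(1)
      by (intro psubset_card_mono) auto
    then show False using h mth_props[OF assms] by simp
  qed
qed

lemma Lj_set:
  assumes "finite X" "j \<le> card X"
  shows "Lj j X = set (take j (sorted_list_of_set X))"
proof -
  define xs where "xs = sorted_list_of_set X"
  have len: "length xs = card X" unfolding xs_def by simp
  have "Lj j X = set (take j xs)"
proof -
      have "set (take j xs) = {take j xs ! k | k. k < j}" using len assms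
        by (auto simp: set_conv_nth min_def)
      also have "\<dots> = {xs ! k | k. k < j}" 
      proof (intro set_eqI iffI)
        fix z assume "z \<in> {take j xs ! k | k. k < j}"
        then obtain k where "k < j" "z = take j xs ! k" by blast
        then show "z \<in> {xs ! k | k. k < j}" by auto
      next
        fix z assume "z \<in> {xs ! k | k. k < j}"
        then obtain k where "k < j" "z = xs ! k" by blast
        then have "z = take j xs ! k" by simp
        then show "z \<in> {take j xs ! k | k. k < j}" using \<open>k < j\<close> by blast
      qed
      also have "\<dots> = Lj j X" unfolding Lj_def mth_def xs_def[symmetric]
      proof (intro set_eqI iffI)
        fix z assume "z \<in> {xs ! k | k. k < j}"
        then obtain k where "k < j" "z = xs ! k" by blast
        then have "z = xs ! (Suc k - 1)" "1 \<le> Suc k" "Suc k \<le> j" by auto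
        then show "z \<in> {xs ! (i - 1) |i. 1 \<le> i \<and> i \<le> j}" by blast
      next
        fix z assume "z \<in> {xs ! (i - 1) |i. 1 \<le> i \<and> i \<le> j}"
        then obtain i where "1 \<le> i" "i \<le> j" "z = xs ! (i - 1)" by blast
        then have "i - 1 < j" "z = xs ! (i - 1)" by auto
        then show "z \<in> {xs ! k | k. k < j}" by blast
      qed
      finally show ?thesis by simp
  qed
  then show ?thesis unfolding xs_def .
qed

lemma Lj_facts:
  assumes "finite X" "j \<le> card X"
  shows "Lj j X \<subseteq> X" "card (Lj j X) = j"
proof -
  have d: "distinct (take j (sorted_list_of_set X))" by simp
  show "Lj j X \<subseteq> X" using Lj_set[OF assms] assms(1)
    by (metis in_set_takeD set_sorted_list_of_set subsetI)
  show "card (Lj j X) = j" using Lj_set[OF assms] distinct_card[OF d] assms by simp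
qed

lemma mth_Lj:
  assumes "finite X" "j \<le> card X" "1 \<le> i" "i \<le> j"
  shows "mth (Lj j X) i = mth X i"
proof -
  define xs where "xs = sorted_list_of_set X"
  have len: "length xs = card X" unfolding xs_def by simp
  have so: "sorted xs" "distinct xs" unfolding xs_def by auto
  have "Lj j X = set (take j xs)" using Lj_set[OF assms(1,2)] xs_def by simp
  then have "sorted_list_of_set (Lj j X) = take j xs"
    using so by (simp add: sorted_list_of_set.idem_if_sorted_distinct)
  then show ?thesis using assms len unfolding mth_def xs_def[symmetric] by simp
qed

lemma mth_Rj:
  assumes "finite X" "j \<le> card X" "1 \<le> i" "i \<le> j"
  shows "mth (Rj j X) i = mth X (card X - j + i)"
proof -
  define xs where "xs = sorted_list_of_set X"
  define c where "c = card X"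
  have len: "length xs = c" unfolding xs_def c_def by simp
  have so: "sorted xs" "distinct xs" unfolding xs_def by auto
  have "Rj j X = set (drop (c - j) xs)"
  proof (intro set_eqI iffI)
    fix z assume "z \<in> Rj j X"
    then obtain i where i: "c - j + 1 \<le> i" "i \<le> c" "z = xs ! (i - 1)"
      unfolding Rj_def mth_def xs_def[symmetric] c_def[symmetric] by blast
    then have "z = drop (c - j) xs ! (i - 1 - (c - j))" "i - 1 - (c - j) < length (drop (c - j) xs)"
      using len by auto
    then show "z \<in> set (drop (c - j) xs)" by (metis nth_mem)
  next
    fix z assume "z \<in> set (drop (c - j) xs)"
    then obtain k where k: "k < length (drop (c - j) xs)" "z = drop (c - j) xs ! k"
      by (auto simp: in_set_conv_nth)
    then have "z = xs ! ((c - j + k + 1) - 1)" "c - j + 1 \<le> c - j + k + 1" "c - j + k + 1 \<le> c"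
      using len assms(2) c_def by auto
    then show "z \<in> Rj j X"
      unfolding Rj_def mth_def xs_def[symmetric] c_def[symmetric] by blast
  qed
  then have "sorted_list_of_set (Rj j X) = drop (c - j) xs"
    using so by (simp add: sorted_list_of_set.idem_if_sorted_distinct)
  then show ?thesis using assms len unfolding mth_def xs_def[symmetric] c_def[symmetric]
    by simp
qed

lemma shift_le_LR:
  assumes "finite X" "finite Y" "j \<le> card X" "j \<le> card Y"
  shows "shift_le j (Lj j Y) (Rj j X) \<longleftrightarrow>
     (\<forall>i\<in>{1..j}. mth Y i \<le> mth X (card X - j + i))"
  unfolding shift_le_def using mth_Lj[OF assms(2,4)] mth_Rj[OF assms(1,3)] by auto

lemma inter_shift:
  assumes "finite X" "finite Y" "card X = a" "card Y = a" "j \<le> a"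
    "j \<le> card (X \<inter> Y)" "1 \<le> i" "i \<le> j"
  shows "mth Y i \<le> mth X (a - j + i)"
proof -
  define x where "x = mth X (a - j + i)"
  have cx: "cnt X x = a - j + i" unfolding x_def using mth_props(2)[OF assms(1)] assms by simp
  define S where "S = X \<inter> Y"
  have fS: "finite S" using assms S_def by simp
  have "{y\<in>S. x < y} \<subseteq> X - {y\<in>X. y \<le> x}" unfolding S_def by auto
  then have "card {y\<in>S. x < y} \<le> card (X - {y\<in>X. y \<le> x})"
    using assms by (intro card_mono) auto
  also have "\<dots> = a - (a - j + i)" using cx assms unfolding cnt_def
    by (subst card_Diff_subset) auto
  finally have c1: "card {y\<in>S. x < y} \<le> j - i" using assms by simp
  have "S = {y\<in>S. y \<le> x} \<union> {y\<in>S. x < y}" by auto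
  then have "card S \<le> card {y\<in>S. y \<le> x} + card {y\<in>S. x < y}"
    by (metis card_Un_le)
  then have "i \<le> card {y\<in>S. y \<le> x}" using c1 assms S_def by simp
  also have "\<dots> \<le> cnt Y x" unfolding cnt_def S_def using assms by (intro card_mono) auto
  finally have "i \<le> cnt Y x" .
  then show ?thesis using mth_le_iff[OF assms(2)] assms unfolding x_def by simp
qed

lemma cnt_smallest:
  assumes "finite A"
  shows "cnt {y\<in>A. cnt A y \<le> k} x = min k (cnt A x)"
proof (cases "cnt A x \<le> k")
  case True
  have "cnt A y \<le> k" if "y \<in> A" "y \<le> x" for y
    using cnt_mono[OF assms that(2)] True by simp
  then have "{y\<in>{y\<in>A. cnt A y \<le> k}. y \<le> x} = {y\<in>A. y \<le> x}" by auto
  then show ?thesis using True unfolding cnt_def by simp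
next
  case False
  have "{y\<in>{y\<in>A. cnt A y \<le> k}. y \<le> x} = {y\<in>A. cnt A y \<le> k}"
  proof -
    have "y \<le> x" if "y \<in> A" "cnt A y \<le> k" for y
    proof (rule ccontr)
      assume "\<not> y \<le> x"
      then have "cnt A x \<le> cnt A y" using cnt_mono[OF assms] by simp
      then show False using False that by simp
    qed
    then show ?thesis by auto
  qed
  moreover have "card {y\<in>A. cnt A y \<le> k} = k"
  proof -
    have "cnt A x \<le> card A" unfolding cnt_def using assms by (intro card_mono) auto
    then have "k \<le> card A" using False by simp
    define xs where "xs = sorted_list_of_set A"
    have "{y\<in>A. cnt A y \<le> k} = mth A ` {1..k}"
    proof (intro set_eqI iffI)
      fix y assume y: "y \<in> {y\<in>A. cnt A y \<le> k}"
      have "y \<in> {z\<in>A. z \<le> y}" using y by simp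
      moreover have "finite {z\<in>A. z \<le> y}" using assms by simp
      ultimately have "0 < card {z\<in>A. z \<le> y}" using card_gt_0_iff by blast
      then have c1: "1 \<le> cnt A y" unfolding cnt_def by simp
      have c2: "cnt A y \<le> card A" unfolding cnt_def using assms by (intro card_mono) auto
      have "mth A (cnt A y) = y"
      proof -
        have le: "mth A (cnt A y) \<le> y" using mth_le_iff[OF assms c1 c2] by simp
        show ?thesis
        proof (rule ccontr)
          assume "mth A (cnt A y) \<noteq> y"
          then have lt: "mth A (cnt A y) < y" using le by simp
          have "{z\<in>A. z \<le> mth A (cnt A y)} \<subseteq> {z\<in>A. z \<le> y}" using lt by auto
          moreover have "y \<in> {z\<in>A. z \<le> y}" "y \<notin> {z\<in>A. z \<le> mth A (cnt A y)}"
            using lt y by auto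
          ultimately have "{z\<in>A. z \<le> mth A (cnt A y)} \<subset> {z\<in>A. z \<le> y}" by blast
          then have "cnt A (mth A (cnt A y)) < cnt A y" unfolding cnt_def
            using assms by (intro psubset_card_mono) auto
          then show False using mth_props(2)[OF assms c1 c2] by simp
        qed
      qed
      then show "y \<in> mth A ` {1..k}" using c1 y by force
    next
      fix y assume "y \<in> mth A ` {1..k}"
      then obtain i where i: "1 \<le> i" "i \<le> k" "y = mth A i" by auto
      have "i \<le> card A" using i \<open>k \<le> card A\<close> by simp
      then have "mth A i \<in> A" "cnt A (mth A i) = i" using mth_props[OF assms i(1)] by auto
      then show "y \<in> {y\<in>A. cnt A y \<le> k}" using i by simp
    qed
    moreover have "inj_on (mth A) {1..k}"
    proof (rule inj_onI)
      fix i i' assume "i \<in> {1..k}" "i' \<in> {1..k}" "mth A i = mth A i'"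
      moreover have "cnt A (mth A i) = i"
        using mth_props(2)[OF assms, of i] \<open>k \<le> card A\<close> \<open>i \<in> {1..k}\<close> by simp
      moreover have "cnt A (mth A i') = i'"
        using mth_props(2)[OF assms, of i'] \<open>k \<le> card A\<close> \<open>i' \<in> {1..k}\<close> by simp
      ultimately show "i = i'" by metis
    qed
    ultimately show ?thesis by (simp add: card_image)
  qed
  ultimately show ?thesis using False unfolding cnt_def by simp
qed

lemma cnt_interval: "card {y\<in>{1..n::nat}. y \<le> x} = min x n"
proof -
  have "{y\<in>{1..n::nat}. y \<le> x} = {1..min x n}" by auto
  then show ?thesis by simp
qed

lemma construct:
  assumes "S \<subseteq> {1..n}" "card S = j" "j \<le> a" "a \<le> n" "F \<subseteq> {1..n}" "card F = a"
    "\<forall>i\<in>{1..j}. mth S i \<le> mth F (a - j + i)"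
  shows "\<exists>H. H \<subseteq> {1..n} \<and> card H = a \<and> S \<subseteq> H \<and> (\<forall>i\<in>{1..a}. mth H i \<le> mth F i)"
proof -
  define A where "A = {1..n} - S"
  define k where "k = a - j"
  define C where "C = {y\<in>A. cnt A y \<le> k}"
  define H where "H = S \<union> C"
  have fA: "finite A" unfolding A_def by simp
  have fS: "finite S" using assms(1) finite_subset by blast
  have fF: "finite F" using assms(5) finite_subset by blast
  have fC: "finite C" unfolding C_def using fA by simp
  have cSle: "cnt S x \<le> min x n" for x
  proof -
    have "cnt S x \<le> card {y\<in>{1..n}. y \<le> x}" unfolding cnt_def
      by (intro card_mono) (use assms(1) in auto)
    then show ?thesis using cnt_interval by simp
  qed
  have cntA: "cnt A x = min x n - cnt S x" for x
  proof -
    have "{y\<in>A. y \<le> x} = {y\<in>{1..n}. y \<le> x} - {y\<in>S. y \<le> x}" unfolding A_def by auto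
    moreover have "{y\<in>S. y \<le> x} \<subseteq> {y\<in>{1..n}. y \<le> x}" using assms(1) by auto
    ultimately have "card {y\<in>A. y \<le> x} = card {y\<in>{1..n}. y \<le> x} - card {y\<in>S. y \<le> x}"
      using fS by (simp add: card_Diff_subset)
    then show ?thesis unfolding cnt_def using cnt_interval by simp
  qed
  have cntC: "cnt C x = min k (cnt A x)" for x unfolding C_def using cnt_smallest[OF fA] .
  have "cnt S n = j" unfolding cnt_def using assms(1,2)
    by (metis (no_types, lifting) atLeastAtMost_iff mem_Collect_eq subset_eq subset_antisym)
  have "C \<subseteq> {1..n}" unfolding C_def A_def by auto
  then have "{y\<in>C. y \<le> n} = C" by auto
  then have "card C = cnt C n" unfolding cnt_def by simp
  also have "\<dots> = k" using cntC cntA \<open>cnt S n = j\<close> assms k_def by simp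
  finally have cardC: "card C = k" .
  have disj: "S \<inter> C = {}" unfolding C_def A_def by auto
  have cardH: "card H = a" unfolding H_def using card_Un_disjoint[OF fS fC disj] cardC assms k_def
    by simp
  have fH: "finite H" unfolding H_def using fS fC by simp
  have cntH: "cnt H x = cnt S x + cnt C x" for x
  proof -
    have "{y\<in>H. y \<le> x} = {y\<in>S. y \<le> x} \<union> {y\<in>C. y \<le> x}" unfolding H_def by auto
    moreover have "{y\<in>S. y \<le> x} \<inter> {y\<in>C. y \<le> x} = {}" using disj by auto
    ultimately show ?thesis unfolding cnt_def using fS fC by (simp add: card_Un_disjoint)
  qed
  have "mth H i \<le> mth F i" if i: "i \<in> {1..a}" for i
  proof -
    define f where "f = mth F i"
    have i1: "1 \<le> i" "i \<le> card F" using i assms by auto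
    have "f \<in> F" unfolding f_def using mth_props(1)[OF fF i1] .
    then have fn: "f \<le> n" using assms(5) by auto
    have "i = cnt F f" unfolding f_def using mth_props(2)[OF fF i1] by simp
    also have "\<dots> \<le> card {y\<in>{1..n}. y \<le> f}" unfolding cnt_def
      by (intro card_mono) (use assms(5) in auto)
    finally have if1: "i \<le> f" using cnt_interval fn by simp
    have sf: "cnt S f \<le> f" using cSle[of f] by simp
    have ch: "cnt H f = cnt S f + min k (f - cnt S f)"
      using cntH cntC cntA fn by simp
    have "i \<le> cnt S f + k"
    proof (cases "i \<le> k")
      case True then show ?thesis by simp
    next
      case False
      define i' where "i' = i - k"
      have i': "1 \<le> i'" "i' \<le> card S" "i' \<in> {1..j}" using False i assms k_def i'_def by auto
      have "a - j + i' = i" using False k_def i'_def assms by simp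
      then have "mth S i' \<le> f" using assms(7) i' f_def by metis
      then have "i' \<le> cnt S f" using mth_le_iff[OF fS i'(1,2)] by simp
      then show ?thesis using i'_def by simp
    qed
    then have "i \<le> cnt H f" using ch sf if1 by simp
    then show ?thesis using mth_le_iff[OF fH i1(1)] cardH i f_def by simp
  qed
  moreover have "H \<subseteq> {1..n}" unfolding H_def using assms(1) \<open>C \<subseteq> {1..n}\<close> by simp
  ultimately show ?thesis using cardH unfolding H_def by blast
qed

theorem lemma3:
  fixes n a t :: nat and F G :: "nat set set"
  assumes "t < a" and "a < n"
    and "shift_ideal n a F"
    and "G \<subseteq> ksubsets n a"
  shows "(\<forall>X\<in>F. \<forall>Y\<in>G. card (X \<inter> Y) \<le> t) \<longleftrightarrow>
         (\<forall>X\<in>F. \<forall>Y\<in>G. \<not> shift_le (t + 1) (Lj (t + 1) Y) (Rj (t + 1) X))"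
proof
  assume A: "\<forall>X\<in>F. \<forall>Y\<in>G. card (X \<inter> Y) \<le> t"
  show "\<forall>X\<in>F. \<forall>Y\<in>G. \<not> shift_le (t + 1) (Lj (t + 1) Y) (Rj (t + 1) X)"
  proof (intro ballI notI)
    fix X Y assume X: "X \<in> F" and Y: "Y \<in> G"
      and sh: "shift_le (t + 1) (Lj (t + 1) Y) (Rj (t + 1) X)"
    have Xk: "X \<subseteq> {1..n}" "card X = a" using X assms(3) unfolding shift_ideal_def ksubsets_def
      by auto
    have Yk: "Y \<subseteq> {1..n}" "card Y = a" using Y assms(4) unfolding ksubsets_def by auto
    have fX: "finite X" using Xk finite_subset by blast
    have fY: "finite Y" using Yk finite_subset by blast
    have cond: "\<forall>i\<in>{1..t+1}. mth Y i \<le> mth X (a - (t + 1) + i)"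
      using sh shift_le_LR[OF fX fY, of "t+1"] Xk Yk assms(1) by simp
    define S where "S = Lj (t + 1) Y"
    have SY: "S \<subseteq> Y" "card S = t + 1" unfolding S_def using Lj_facts[OF fY] Yk assms(1) by auto
    have cond': "\<forall>i\<in>{1..t+1}. mth S i \<le> mth X (a - (t + 1) + i)"
      using cond mth_Lj[OF fY, of "t+1"] Yk assms(1) unfolding S_def by simp
    obtain H where H: "H \<subseteq> {1..n}" "card H = a" "S \<subseteq> H" "\<forall>i\<in>{1..a}. mth H i \<le> mth X i"
      using construct[OF _ SY(2) _ _ Xk(1) Xk(2) cond'] SY Yk assms(1,2) by fastforce
    have "H \<in> ksubsets n a" using H unfolding ksubsets_def by simp
    moreover have "shift_le a H X" using H unfolding shift_le_def by simp
    ultimately have "H \<in> F" using X assms(3) unfolding shift_ideal_def by blast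
    then have "card (H \<inter> Y) \<le> t" using A Y by blast
    moreover have "S \<subseteq> H \<inter> Y" using H SY by auto
    then have "t + 1 \<le> card (H \<inter> Y)" using SY fY card_mono[of "H \<inter> Y" S] by simp
    ultimately show False by simp
  qed
next
  assume B: "\<forall>X\<in>F. \<forall>Y\<in>G. \<not> shift_le (t + 1) (Lj (t + 1) Y) (Rj (t + 1) X)"
  show "\<forall>X\<in>F. \<forall>Y\<in>G. card (X \<inter> Y) \<le> t"
  proof (intro ballI)
    fix X Y assume X: "X \<in> F" and Y: "Y \<in> G"
    have Xk: "X \<subseteq> {1..n}" "card X = a" using X assms(3) unfolding shift_ideal_def ksubsets_def
      by auto
    have Yk: "Y \<subseteq> {1..n}" "card Y = a" using Y assms(4) unfolding ksubsets_def by auto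
    have fX: "finite X" using Xk finite_subset by blast
    have fY: "finite Y" using Yk finite_subset by blast
    show "card (X \<inter> Y) \<le> t"
    proof (rule ccontr)
      assume "\<not> card (X \<inter> Y) \<le> t"
      then have c: "t + 1 \<le> card (X \<inter> Y)" by simp
      have "\<forall>i\<in>{1..t+1}. mth Y i \<le> mth X (a - (t + 1) + i)"
        using inter_shift[OF fX fY Xk(2) Yk(2) _ c] assms(1) by simp
      then have "shift_le (t + 1) (Lj (t + 1) Y) (Rj (t + 1) X)"
        using shift_le_LR[OF fX fY, of "t+1"] Xk Yk assms(1) by simp
      then show False using B X Y by blast
    qed
  qed
qed

end
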